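(* Let $\mathbb{K}$ be a field of characteristic $2$, let $(A,\cdot,\{-,-\},(-)^{\{2\}})$ be a restricted Poisson algebra, let $k\ge1$, and let $(A^t_k,\cdot,\mu_{(k)},\omega_{(k)})$ be a formal deformation of order $k$ of $A$, where $\mu_{(k)}=\{-,-\}+\sum_{i=1}^kt^i\mu_i$ and $\omega_{(k)}=(-)^{\{2\}}+\sum_{i=1}^kt^i\omega_i$. Let $(\mu_{k+1},\omega_{k+1})\in C^2_{\rm PA}(A)$ and set $\mu_{(k+1)}=\mu_{(k)}+t^{k+1}\mu_{k+1}$, $\omega_{(k+1)}=\omega_{(k)}+t^{k+1}\omega_{k+1}$. Then $(A^t_{k+1},\cdot,\mu_{(k+1)},\omega_{(k+1)})$ is a formal deformation of order $k+1$ of $A$ if and only if $(\mathrm{obs}^{(1)}_{k+1},\mathrm{obs}^{(2)}_{k+1})=\mathrm{d}^2_{\rm PA}(\mu_{k+1},\omega_{k+1})$, where for $x,y,z\in A$, $\mathrm{obs}^{(1)}_{k+1}(x,y,z)=\sum_{i=1}^k\big(\mu_i(x,\mu_{k+1-i}(y,z))+\mu_i(y,\mu_{k+1-i}(z,x))+\mu_i(z,\mu_{k+1-i}(x,y))\big)$ and $\mathrm{obs}^{(2)}_{k+1}(x,y)=\sum_{i=1}^k\big(\mu_i(y,\omega_{k+1-i}(x))+\mu_i(x,\mu_{k+1-i}(x,y))\big)$.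
   Context: $\mathbb{K}$ has characteristic $2$. Restricted Poisson algebra: commutative associative $(A,\cdot)$ with Lie bracket satisfying $\{ab,c\}=a\{b,c\}+b\{a,c\}$, with a map $(-)^{\{2\}}$ making $(A,\{,\})$ a restricted Lie algebra ($(\lambda x)^{\{2\}}=\lambda^2x^{\{2\}}$, $\mathrm{ad}_{x^{\{2\}}}=\mathrm{ad}_x^2$, $(x+y)^{\{2\}}=x^{\{2\}}+y^{\{2\}}+\{x,y\}$) and $(xy)^{\{2\}}=x^2y^{\{2\}}+y^2x^{\{2\}}+xy\{x,y\}$. $\mathfrak{X}^k(A)$: alternating $k$-linear maps $A^k\to A$ that are derivations of $\cdot$ in each argument. For $n\ge2$, $C^n_{\rm PA}(A)$ = pairs $(\varphi,\omega)$ with $\varphi\in\mathfrak{X}^n(A)$, $\omega:A\times A^{n-2}\to A$ alternating multilinear in the last $n-2$ arguments, $\omega(\lambda x,z)=\lambda^2\omega(x,z)$, $\omega(x+y,z)=\omega(x,z)+\omega(y,z)+\varphi(x,y,z)$, $\omega(xy,z)=x^2\omega(y,z)+y^2\omega(x,z)+xy\varphi(x,y,z)$, $\omega(x,..,z_iz_i',..)=z_i\omega(x,..,z_i',..)+z_i'\omega(x,..,z_i,..)$. $\mathrm{d}^2_{\rm PA}(\varphi,\omega)=(\mathrm{d}_{\rm CE}\varphi,\delta^2\omega)$ with $\mathrm{d}_{\rm CE}\varphi(x,y,z)=\varphi(\{x,y\},z)+\varphi(\{x,z\},y)+\varphi(\{y,z\},x)+\{x,\varphi(y,z)\}+\{y,\varphi(x,z)\}+\{z,\varphi(x,y)\}$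 and $\delta^2\omega(x,z)=\{x,\varphi(x,z)\}+\{z,\omega(x)\}+\varphi(x^{\{2\}},z)+\varphi(\{x,z\},x)$. $\mathbb{K}^t_k=\mathbb{K}[t]/(t^{k+1})$, $A^t_k=A\otimes\mathbb{K}^t_k$. A formal deformation of order $k$ is given by $\mu_{(k)},\omega_{(k)}$ as in the claim with all $(\mu_i,\omega_i)\in C^2_{\rm PA}(A)$ such that $(A^t_k,\mu_{(k)},\omega_{(k)})$ is a restricted Lie algebra over $\mathbb{K}^t_k$ (with $\mu_{(k)}$ extended $\mathbb{K}^t_k$-bilinearly and $\omega_{(k)}$ extended by $\omega(\lambda X)=\lambda^2\omega(X)$, $\omega(X+Y)=\omega(X)+\omega(Y)+\mu(X,Y)$). *)

theory Defs
  imports Main "HOL.Modules"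
begin

text \<open>The ground field is a type 'k of class field; the algebra A is a type 'a
of class comm_ring (commutative, associative, not necessarily unital), made into a
'k-algebra by a scalar multiplication sm, which is a 'k-module structure (library locale
module) such that the product is 'k-bilinear.\<close>

definition k_algebra :: "('k::field \<Rightarrow> 'a::comm_ring \<Rightarrow> 'a) \<Rightarrow> bool" where
  "k_algebra sm \<longleftrightarrow> module sm \<and>
     (\<forall>c x y. sm c (x * y) = sm c x * y) \<and> (\<forall>c x y. sm c (x * y) = x * sm c y)"

definition restricted_poisson ::
  "('k::field \<Rightarrow> 'a::comm_ring \<Rightarrow> 'a) \<Rightarrow> ('a \<Rightarrow> 'a \<Rightarrow> 'a) \<Rightarrow> ('a \<Rightarrow> 'a) \<Rightarrow> bool" where
  "restricted_poisson sm br p2 \<longleftrightarrow> k_algebra sm \<and>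
     \<comment> \<open>Lie bracket: bilinear, alternating, Jacobi\<close>
     (\<forall>x y z. br (x + y) z = br x z + br y z) \<and>
     (\<forall>x y z. br x (y + z) = br x y + br x z) \<and>
     (\<forall>c x y. br (sm c x) y = sm c (br x y)) \<and>
     (\<forall>c x y. br x (sm c y) = sm c (br x y)) \<and>
     (\<forall>x. br x x = 0) \<and>
     (\<forall>x y z. br x (br y z) + br y (br z x) + br z (br x y) = 0) \<and>
     \<comment> \<open>Leibniz rule\<close>
     (\<forall>a b c. br (a * b) c = a * br b c + b * br a c) \<and>
     \<comment> \<open>restricted Lie algebra\<close>
     (\<forall>c x. p2 (sm c x) = sm (c ^ 2) (p2 x)) \<and>
     (\<forall>x y. br (p2 x) y = br x (br x y)) \<and>
     (\<forall>x y. p2 (x + y) = p2 x + p2 y + br x y) \<and>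
     \<comment> \<open>compatibility with the product\<close>
     (\<forall>x y. p2 (x * y) = x * x * p2 y + y * y * p2 x + x * y * br x y)"

definition biderivation ::
  "('k::field \<Rightarrow> 'a::comm_ring \<Rightarrow> 'a) \<Rightarrow> ('a \<Rightarrow> 'a \<Rightarrow> 'a) \<Rightarrow> bool" where
  "biderivation sm \<phi> \<longleftrightarrow>
     (\<forall>x y z. \<phi> (x + y) z = \<phi> x z + \<phi> y z) \<and>
     (\<forall>x y z. \<phi> x (y + z) = \<phi> x y + \<phi> x z) \<and>
     (\<forall>c x y. \<phi> (sm c x) y = sm c (\<phi> x y)) \<and>
     (\<forall>c x y. \<phi> x (sm c y) = sm c (\<phi> x y)) \<and>
     (\<forall>x. \<phi> x x = 0) \<and>
     (\<forall>a b c. \<phi> (a * b) c = a * \<phi> b c + b * \<phi> a c) \<and>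
     (\<forall>a b c. \<phi> c (a * b) = a * \<phi> c b + b * \<phi> c a)"

definition C2PA ::
  "('k::field \<Rightarrow> 'a::comm_ring \<Rightarrow> 'a) \<Rightarrow> ('a \<Rightarrow> 'a \<Rightarrow> 'a) \<Rightarrow> ('a \<Rightarrow> 'a) \<Rightarrow> bool" where
  "C2PA sm \<phi> \<omega> \<longleftrightarrow> biderivation sm \<phi> \<and>
     (\<forall>c x. \<omega> (sm c x) = sm (c ^ 2) (\<omega> x)) \<and>
     (\<forall>x y. \<omega> (x + y) = \<omega> x + \<omega> y + \<phi> x y) \<and>
     (\<forall>x y. \<omega> (x * y) = x * x * \<omega> y + y * y * \<omega> x + x * y * \<phi> x y)"

text \<open>The differential d^2_PA = (d_CE, delta^2).\<close>

definition dCE :: "('a::comm_ring \<Rightarrow> 'a \<Rightarrow> 'a) \<Rightarrow> ('a \<Rightarrow> 'a \<Rightarrow> 'a) \<Rightarrow> 'a \<Rightarrow> 'a \<Rightarrow> 'a \<Rightarrow> 'a" where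
  "dCE br \<phi> x y z = \<phi> (br x y) z + \<phi> (br x z) y + \<phi> (br y z) x
      + br x (\<phi> y z) + br y (\<phi> x z) + br z (\<phi> x y)"

definition delta2 ::
  "('a::comm_ring \<Rightarrow> 'a \<Rightarrow> 'a) \<Rightarrow> ('a \<Rightarrow> 'a) \<Rightarrow> ('a \<Rightarrow> 'a \<Rightarrow> 'a) \<Rightarrow> ('a \<Rightarrow> 'a) \<Rightarrow> 'a \<Rightarrow> 'a \<Rightarrow> 'a" where
  "delta2 br p2 \<phi> \<omega> x z = br x (\<phi> x z) + br z (\<omega> x) + \<phi> (p2 x) z + \<phi> (br x z) x"

text \<open>Truncated polynomial ring K^t_k = K[t]/(t^(k+1)) and A^t_k = A \<otimes> K^t_k:
 elements are coefficient sequences vanishing above degree k.\<close>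

definition tK :: "nat \<Rightarrow> (nat \<Rightarrow> 'k::field) set" where
  "tK k = {l. \<forall>j>k. l j = 0}"

definition tA :: "nat \<Rightarrow> (nat \<Rightarrow> 'a::comm_ring) set" where
  "tA k = {X. \<forall>j>k. X j = 0}"

definition tadd :: "(nat \<Rightarrow> 'a::comm_ring) \<Rightarrow> (nat \<Rightarrow> 'a) \<Rightarrow> nat \<Rightarrow> 'a" where
  "tadd X Y = (\<lambda>n. X n + Y n)"

definition tmulK :: "nat \<Rightarrow> (nat \<Rightarrow> 'k::field) \<Rightarrow> (nat \<Rightarrow> 'k) \<Rightarrow> nat \<Rightarrow> 'k" where
  "tmulK k l m = (\<lambda>n. if n \<le> k then (\<Sum>i\<le>n. l i * m (n - i)) else 0)"

definition tsmul ::
  "nat \<Rightarrow> ('k::field \<Rightarrow> 'a::comm_ring \<Rightarrow> 'a) \<Rightarrow> (nat \<Rightarrow> 'k) \<Rightarrow> (nat \<Rightarrow> 'a) \<Rightarrow> nat \<Rightarrow> 'a" where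
  "tsmul k sm l X = (\<lambda>n. if n \<le> k then (\<Sum>i\<le>n. sm (l i) (X (n - i))) else 0)"

text \<open>K^t_k-bilinear extension of mu_(k) = sum_i t^i mu_i (mu i for i = 0..k).\<close>

definition tbr ::
  "nat \<Rightarrow> (nat \<Rightarrow> 'a::comm_ring \<Rightarrow> 'a \<Rightarrow> 'a) \<Rightarrow> (nat \<Rightarrow> 'a) \<Rightarrow> (nat \<Rightarrow> 'a) \<Rightarrow> nat \<Rightarrow> 'a" where
  "tbr k mu X Y = (\<lambda>n. if n \<le> k then
      (\<Sum>i\<le>n. \<Sum>j\<le>n - i. mu i (X j) (Y (n - i - j))) else 0)"

text \<open>Extension of omega_(k) = sum_i t^i omega_i to A^t_k determined by
 omega(lambda X) = lambda^2 omega(X), omega(X+Y) = omega X + omega Y + mu(X,Y):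
 omega(sum_j t^j X_j) = sum_j t^(2j) omega(X_j) + sum_(j<l) t^(j+l) mu(X_j, X_l).\<close>

definition tom ::
  "nat \<Rightarrow> (nat \<Rightarrow> 'a::comm_ring \<Rightarrow> 'a \<Rightarrow> 'a) \<Rightarrow> (nat \<Rightarrow> 'a \<Rightarrow> 'a) \<Rightarrow> (nat \<Rightarrow> 'a) \<Rightarrow> nat \<Rightarrow> 'a" where
  "tom k mu om X = (\<lambda>n. if n \<le> k then
      (\<Sum>j\<le>n. if 2 * j \<le> n then om (n - 2 * j) (X j) else 0)
    + (\<Sum>j\<le>n. \<Sum>l\<le>n. if j < l \<and> j + l \<le> n then mu (n - j - l) (X j) (X l) else 0)
    else 0)"

definition restricted_lie_trunc ::
  "nat \<Rightarrow> ('k::field \<Rightarrow> 'a::comm_ring \<Rightarrow> 'a) \<Rightarrow> (nat \<Rightarrow> 'a \<Rightarrow> 'a \<Rightarrow> 'a) \<Rightarrow> (nat \<Rightarrow> 'a \<Rightarrow> 'a) \<Rightarrow> bool" where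
  "restricted_lie_trunc k sm mu om \<longleftrightarrow>
     (\<forall>X\<in>tA k. \<forall>Y\<in>tA k. \<forall>Z\<in>tA k. \<forall>l\<in>(tK k :: (nat \<Rightarrow> 'k) set).
        tbr k mu (tadd X Y) Z = tadd (tbr k mu X Z) (tbr k mu Y Z) \<and>
        tbr k mu X (tadd Y Z) = tadd (tbr k mu X Y) (tbr k mu X Z) \<and>
        tbr k mu (tsmul k sm l X) Y = tsmul k sm l (tbr k mu X Y) \<and>
        tbr k mu X (tsmul k sm l Y) = tsmul k sm l (tbr k mu X Y) \<and>
        tbr k mu X X = (\<lambda>n. 0) \<and>
        tadd (tadd (tbr k mu X (tbr k mu Y Z)) (tbr k mu Y (tbr k mu Z X)))
             (tbr k mu Z (tbr k mu X Y)) = (\<lambda>n. 0) \<and>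
        tom k mu om (tsmul k sm l X) = tsmul k sm (tmulK k l l) (tom k mu om X) \<and>
        tbr k mu (tom k mu om X) Y = tbr k mu X (tbr k mu X Y) \<and>
        tom k mu om (tadd X Y) = tadd (tadd (tom k mu om X) (tom k mu om Y)) (tbr k mu X Y))"

text \<open>Formal deformation of order k: mu_(k) = br + sum_(i=1..k) t^i mus i,
 omega_(k) = p2 + sum_(i=1..k) t^i oms i (values of mus, oms at 0 and above k are ignored).\<close>

definition formal_deformation ::
  "('k::field \<Rightarrow> 'a::comm_ring \<Rightarrow> 'a) \<Rightarrow> ('a \<Rightarrow> 'a \<Rightarrow> 'a) \<Rightarrow> ('a \<Rightarrow> 'a) \<Rightarrow> nat
     \<Rightarrow> (nat \<Rightarrow> 'a \<Rightarrow> 'a \<Rightarrow> 'a) \<Rightarrow> (nat \<Rightarrow> 'a \<Rightarrow> 'a) \<Rightarrow> bool" where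
  "formal_deformation sm br p2 k mus oms \<longleftrightarrow>
     (\<forall>i\<in>{1..k}. C2PA sm (mus i) (oms i)) \<and>
     restricted_lie_trunc k sm (mus(0 := br)) (oms(0 := p2))"

definition obs1 :: "(nat \<Rightarrow> 'a::comm_ring \<Rightarrow> 'a \<Rightarrow> 'a) \<Rightarrow> nat \<Rightarrow> 'a \<Rightarrow> 'a \<Rightarrow> 'a \<Rightarrow> 'a" where
  "obs1 mus k x y z = (\<Sum>i=1..k.
      mus i x (mus (k + 1 - i) y z) + mus i y (mus (k + 1 - i) z x) + mus i z (mus (k + 1 - i) x y))"

definition obs2 ::
  "(nat \<Rightarrow> 'a::comm_ring \<Rightarrow> 'a \<Rightarrow> 'a) \<Rightarrow> (nat \<Rightarrow> 'a \<Rightarrow> 'a) \<Rightarrow> nat \<Rightarrow> 'a \<Rightarrow> 'a \<Rightarrow> 'a" where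
  "obs2 mus oms k x y = (\<Sum>i=1..k.
      mus i y (oms (k + 1 - i) x) + mus i x (mus (k + 1 - i) x y))"

end

theory Submission
  imports Defs "HOL-Library.Function_Algebras"
begin

lemma sum_fun_apply: "(sum f A) x = (\<Sum>a\<in>A. f a x)"
  by (induct A rule: infinite_finite_induct) auto

lemma sum_rev: "(\<Sum>i\<le>m. f (m - i)) = (\<Sum>i\<le>(m::nat). f i)"
  by (rule sum.reindex_bij_witness[where i="\<lambda>i. m - i" and j="\<lambda>i. m - i"]) auto

lemma sum_restrict: "m \<le> n \<Longrightarrow> (\<Sum>i\<le>n. if i \<le> m then f i else 0) = (\<Sum>i\<le>(m::nat). f i)"
proof -
  assume "m \<le> n"
  have "(\<Sum>i\<le>n. if i \<le> m then f i else 0) = (\<Sum>i\<le>m. if i \<le> m then f i else 0)"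
    by (rule sum.mono_neutral_right) (use \<open>m \<le> n\<close> in auto)
  then show ?thesis by simp
qed

lemma sym_sum_zero:
  fixes h :: "nat \<Rightarrow> nat \<Rightarrow> 'c::ab_group_add"
  assumes c2: "\<And>x::'c. x + x = 0" and sy: "\<And>j l. h j l = h l j" and dg: "\<And>j. h j j = 0"
  shows "(\<Sum>j\<in>A. \<Sum>l\<in>A. h j l) = 0"
proof -
  have pw: "h j l = (if j < l then h j l else 0) + (if l < j then h l j else 0)" for j l
    using sy[of j l] dg[of j] by (cases j l rule: linorder_cases) auto
  have "(\<Sum>j\<in>A. \<Sum>l\<in>A. h j l) = (\<Sum>j\<in>A. \<Sum>l\<in>A. if j < l then h j l else 0)
       + (\<Sum>j\<in>A. \<Sum>l\<in>A. if l < j then h l j else 0)"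
    by (subst pw) (simp add: sum.distrib)
  also have "(\<Sum>j\<in>A. \<Sum>l\<in>A. if l < j then h l j else 0) = (\<Sum>j\<in>A. \<Sum>l\<in>A. if j < l then h j l else 0)"
    by (rule sum.swap)
  finally show ?thesis using c2 by simp
qed

lemma frob_sum:
  fixes f :: "nat \<Rightarrow> 'c::ab_group_add"
  assumes c2: "\<And>x::'c. x + x = 0" and sy: "\<And>i. i \<le> p \<Longrightarrow> f (p - i) = f i"
  shows "(\<Sum>i\<le>p. f i) = (if even p then f (p div 2) else 0)"
proof -
  define g where "g i = (if 2 * i < p then f i else 0)" for i
  have pw: "f i = g i + g (p - i) + (if i = p div 2 \<and> even p then f i else 0)" if "i \<le> p" for i
    using sy[of i] that unfolding g_def by (auto elim!: evenE; presburger)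
  have "(\<Sum>i\<le>p. f i) = (\<Sum>i\<le>p. g i) + (\<Sum>i\<le>p. g (p - i)) + (\<Sum>i\<le>p. if i = p div 2 \<and> even p then f i else 0)"
    unfolding sum.distrib[symmetric] by (rule sum.cong[OF refl], rule pw, simp)
  also have "(\<Sum>i\<le>p. g (p - i)) = (\<Sum>i\<le>p. g i)" by (rule sum_rev)
  also have "(\<Sum>i\<le>p. if i = p div 2 \<and> even p then f i else 0) = (if even p then f (p div 2) else 0)"
    by (cases "even p") (auto simp: sum.delta)
  finally show ?thesis using c2 by simp
qed

lemma sum_restrict2:
  fixes n m :: nat
  assumes "\<And>i. i \<le> n \<Longrightarrow> P i = (i \<le> m)" "m \<le> n"
  shows "(\<Sum>i\<le>n. if P i then g i else 0) = (\<Sum>i\<le>(m::nat). g i)"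
proof -
  have "(\<Sum>i\<le>n. if P i then g i else 0) = (\<Sum>i\<le>n. if i \<le> m then g i else 0)"
    by (rule sum.cong) (use assms in auto)
  also have "\<dots> = (\<Sum>i\<le>m. g i)" by (rule sum_restrict[OF assms(2)])
  finally show ?thesis .
qed

lemma sum_zero_if: "(\<And>i. i \<le> n \<Longrightarrow> \<not> P i) \<Longrightarrow> (\<Sum>i\<le>(n::nat). if P i then g i else 0) = 0"
  by (rule sum.neutral) auto

lemma tri_swap:
  fixes n :: nat shows "(\<Sum>i\<le>n. \<Sum>j\<le>n-i. f i j) = (\<Sum>j\<le>n. \<Sum>l\<le>n. if j + l \<le> n then f (n-j-l) j else 0)"
proof -
  have "(\<Sum>i\<le>n. \<Sum>j\<le>n-i. f i j) = (\<Sum>i\<le>n. \<Sum>j\<le>n. if i + j \<le> n then f i j else 0)"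
  proof (rule sum.cong[OF refl])
    fix i assume i: "i \<in> {..n}"
    have "(\<Sum>j\<le>n. if i + j \<le> n then f i j else 0) = (\<Sum>j\<le>n-i. f i j)"
      by (rule sum_restrict2) (use i in auto)
    then show "(\<Sum>j\<le>n-i. f i j) = (\<Sum>j\<le>n. if i + j \<le> n then f i j else 0)" by simp
  qed
  also have "\<dots> = (\<Sum>j\<le>n. \<Sum>i\<le>n. if i + j \<le> n then f i j else 0)" by (rule sum.swap)
  also have "\<dots> = (\<Sum>j\<le>n. \<Sum>l\<le>n. if j + l \<le> n then f (n-j-l) j else 0)"
  proof (rule sum.cong[OF refl])
    fix j assume "j \<in> {..n}"
    then have jn: "j \<le> n" by simp
    have "(\<Sum>i\<le>n. if i + j \<le> n then f i j else 0) = (\<Sum>i\<le>n-j. f i j)"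
      by (rule sum_restrict2) (use jn in auto)
    also have "\<dots> = (\<Sum>l\<le>n-j. f (n-j-l) j)" by (rule sum_rev[symmetric])
    also have "\<dots> = (\<Sum>l\<le>n. if j + l \<le> n then f (n-j-l) j else 0)"
      by (rule sum_restrict2[symmetric]) (use jn in auto)
    finally show "(\<Sum>i\<le>n. if i + j \<le> n then f i j else 0) = (\<Sum>l\<le>n. if j + l \<le> n then f (n-j-l) j else 0)" .
  qed
  finally show ?thesis .
qed

lemma tadd_eq: "tadd X Y = X + Y"
  by (simp add: tadd_def plus_fun_def)

definition M :: "nat \<Rightarrow> 'a::zero \<Rightarrow> nat \<Rightarrow> 'a" where
  "M a x = (\<lambda>n. if n = a then x else 0)"

definition Sh :: "nat \<Rightarrow> nat \<Rightarrow> (nat \<Rightarrow> 'a::zero) \<Rightarrow> nat \<Rightarrow> 'a" where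
  "Sh K e f = (\<lambda>n. if n \<le> K \<and> e \<le> n then f (n - e) else 0)"

lemma tA_add: "X \<in> tA K \<Longrightarrow> Y \<in> tA K \<Longrightarrow> X + Y \<in> tA K"
  by (simp add: tA_def)

lemma tA_zero: "0 \<in> tA K"
  by (simp add: tA_def)

lemma M_tA: "a \<le> K \<Longrightarrow> M a x \<in> tA K"
  by (simp add: tA_def M_def)

lemma decomp: "X \<in> tA K \<Longrightarrow> X = (\<Sum>a\<le>K. M a (X a))"
  by (auto simp: fun_eq_iff sum_fun_apply M_def tA_def sum.delta' not_le)

lemma addext:
  fixes F :: "(nat \<Rightarrow> 'a::comm_ring) \<Rightarrow> 'b::ab_group_add"
  assumes add: "\<And>X Y. X \<in> tA K \<Longrightarrow> Y \<in> tA K \<Longrightarrow> F (X + Y) = F X + F Y"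
    and mon: "\<And>a x. a \<le> K \<Longrightarrow> F (M a x) = 0"
    and X: "X \<in> tA K"
  shows "F X = 0"
proof -
  have F0: "F 0 = 0" using add[OF tA_zero tA_zero] by simp
  have "S \<subseteq> {..K} \<Longrightarrow> F (\<Sum>a\<in>S. M a (X a)) = 0 \<and> (\<Sum>a\<in>S. M a (X a)) \<in> tA K" if "finite S" for S
    using that
  proof (induct S rule: finite_induct)
    case empty
    show ?case by (intro conjI) (simp_all only: sum.empty F0 tA_zero)
  next
    case (insert c S)
    then have c: "c \<le> K" and IH: "F (\<Sum>a\<in>S. M a (X a)) = 0" "(\<Sum>a\<in>S. M a (X a)) \<in> tA K" by auto
    have eq: "(\<Sum>a\<in>insert c S. M a (X a)) = M c (X c) + (\<Sum>a\<in>S. M a (X a))"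
      using insert(1,2) by (rule sum.insert)
    have "F (M c (X c) + (\<Sum>a\<in>S. M a (X a))) = 0"
      using add[OF M_tA[OF c] IH(2)] mon[OF c] IH(1) by (metis add.right_neutral)
    moreover have "M c (X c) + (\<Sum>a\<in>S. M a (X a)) \<in> tA K" by (rule tA_add[OF M_tA[OF c] IH(2)])
    ultimately show ?case unfolding eq by (rule conjI)
  qed
  then have "F (\<Sum>a\<le>K. M a (X a)) = 0" by simp
  then show ?thesis using decomp[OF X] by simp
qed

lemma Sh_cong: "(\<And>d. d \<le> K \<Longrightarrow> f d = g d) \<Longrightarrow> Sh K e f = Sh K e g"
  by (auto simp: Sh_def fun_eq_iff)

lemma tbr_addL: "tbr K mu (X + Y) Z = tbr K mu X Z + tbr K mu Y Z" if "\<And>i x y z. mu i (x + y) z = mu i x z + mu i y z"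
  by (auto simp: tbr_def that sum.distrib fun_eq_iff)

lemma tbr_addR: "tbr K mu X (Y + Z) = tbr K mu X Y + tbr K mu X Z" if "\<And>i x y z. mu i x (y + z) = mu i x y + mu i x z"
  by (auto simp: tbr_def that sum.distrib fun_eq_iff)

definition Jsum :: "(nat \<Rightarrow> 'a::comm_ring \<Rightarrow> 'a \<Rightarrow> 'a) \<Rightarrow> nat \<Rightarrow> 'a \<Rightarrow> 'a \<Rightarrow> 'a \<Rightarrow> 'a" where
  "Jsum mu n x y z = (\<Sum>i\<le>n. mu i x (mu (n-i) y z) + mu i y (mu (n-i) z x) + mu i z (mu (n-i) x y))"

definition Rl :: "(nat \<Rightarrow> 'a::comm_ring \<Rightarrow> 'a \<Rightarrow> 'a) \<Rightarrow> (nat \<Rightarrow> 'a \<Rightarrow> 'a) \<Rightarrow> nat \<Rightarrow> 'a \<Rightarrow> 'a \<Rightarrow> 'a" where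
  "Rl mu om n x y = (\<Sum>i\<le>n. mu i (om (n-i) x) y)"

definition Rr :: "(nat \<Rightarrow> 'a::comm_ring \<Rightarrow> 'a \<Rightarrow> 'a) \<Rightarrow> nat \<Rightarrow> 'a \<Rightarrow> 'a \<Rightarrow> 'a" where
  "Rr mu n x y = (\<Sum>i\<le>n. mu i x (mu (n-i) x y))"

lemma Sh_add: "Sh K e (f::nat \<Rightarrow> 'a::monoid_add) + Sh K e g = Sh K e (\<lambda>d. f d + g d)"
  by (auto simp: Sh_def fun_eq_iff)

lemma Sh_zero: "Sh K e (\<lambda>d. 0) = 0"
  by (auto simp: Sh_def fun_eq_iff)

lemma Sh0: "n \<le> K \<Longrightarrow> Sh K 0 f n = f n"
  by (simp add: Sh_def)

lemma sum_rev2: "(\<Sum>i\<le>d. g (d-i) i) = (\<Sum>i\<le>(d::nat). g i (d-i))"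
  by (rule sum.reindex_bij_witness[where i="\<lambda>i. d - i" and j="\<lambda>i. d - i"]) auto

lemma tsmul_tA: "tsmul K sm l X \<in> tA K"
  by (simp add: tA_def tsmul_def)

lemma tbr_tA: "tbr K mu X Y \<in> tA K"
  by (simp add: tA_def tbr_def)

lemma reidx_even:
  fixes g :: "nat \<Rightarrow> 'b::comm_monoid_add"
  assumes "2 * a \<le> n"
  shows "(\<Sum>j\<le>n. if 2 * j \<le> n \<and> a \<le> j then g (j - a) else 0) = (\<Sum>p\<le>n - 2 * a. if even p then g (p div 2) else 0)"
proof -
  have "(\<Sum>j\<le>n. if 2 * j \<le> n \<and> a \<le> j then g (j - a) else 0) = sum (\<lambda>j. g (j - a)) {j\<in>{..n}. 2 * j \<le> n \<and> a \<le> j}"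
    by (subst sum.inter_filter) auto
  also have "\<dots> = sum (\<lambda>p. g (p div 2)) {p\<in>{..n - 2 * a}. even p}"
    by (rule sum.reindex_bij_witness[where i="\<lambda>p. a + p div 2" and j="\<lambda>j. 2 * (j - a)"])
      (use assms in \<open>auto elim!: evenE\<close>)
  also have "\<dots> = (\<Sum>p\<le>n - 2 * a. if even p then g (p div 2) else 0)"
    by (subst sum.inter_filter) auto
  finally show ?thesis .
qed

locale defo =
  fixes sm :: "'k::field \<Rightarrow> 'a::comm_ring \<Rightarrow> 'a" and mu :: "nat \<Rightarrow> 'a \<Rightarrow> 'a \<Rightarrow> 'a"
    and om :: "nat \<Rightarrow> 'a \<Rightarrow> 'a" and K :: nat
  assumes md: "module sm"
    and c2k: "\<And>c::'k. c + c = 0"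
    and c2a: "\<And>x::'a. x + x = 0"
    and muL: "\<And>i x y z. mu i (x + y) z = mu i x z + mu i y z"
    and muR: "\<And>i x y z. mu i x (y + z) = mu i x y + mu i x z"
    and muSL: "\<And>i c x y. mu i (sm c x) y = sm c (mu i x y)"
    and muSR: "\<And>i c x y. mu i x (sm c y) = sm c (mu i x y)"
    and muA: "\<And>i x. mu i x x = 0"
    and omA: "\<And>i x y. om i (x + y) = om i x + om i y + mu i x y"
    and omS: "\<And>i c x. om i (sm c x) = sm (c^2) (om i x)"
begin

sublocale m: module sm by (fact md)

lemma negA: "- (x::'a) = x"
  using c2a[of x] by (simp add: add_eq_0_iff)

lemma c2eq: "((x::'a) + y = 0) = (x = y)"
  by (metis add_eq_0_iff negA)

lemma mu0L[simp]: "mu i 0 y = 0"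
  using muL[of i 0 0 y] by simp

lemma mu0R[simp]: "mu i x 0 = 0"
  using muR[of i x 0 0] by simp

lemma muSym: "mu i x y = mu i y x"
proof -
  have "mu i (x + y) (x + y) = mu i x y + mu i y x" unfolding muL muR by (simp add: muA)
  then have "mu i x y + mu i y x = 0" by (simp add: muA)
  then show ?thesis by (simp add: c2eq)
qed

lemma om0[simp]: "om i 0 = 0"
  using omA[of i 0 0] by simp

lemma mu_ifL: "mu i (if c then x else 0) y = (if c then mu i x y else 0)" by simp
lemma mu_ifR: "mu i x (if c then y else 0) = (if c then mu i x y else 0)" by simp
lemma om_if: "om i (if c then x else 0) = (if c then om i x else 0)" by simp

lemma mu_sumL: "mu i (sum f A) y = (\<Sum>a\<in>A. mu i (f a) y)"
  by (induct A rule: infinite_finite_induct) (simp_all add: muL)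
lemma mu_sumR: "mu i x (sum f A) = (\<Sum>a\<in>A. mu i x (f a))"
  by (induct A rule: infinite_finite_induct) (simp_all add: muR)

lemma tbr_M1: "tbr K mu (M a x) Y n = (if n \<le> K \<and> a \<le> n then (\<Sum>i\<le>n-a. mu i x (Y (n-a-i))) else 0)"
proof (cases "n \<le> K \<and> a \<le> n")
  case True
  have "tbr K mu (M a x) Y n = (\<Sum>i\<le>n. if a \<le> n - i then mu i x (Y (n-(i+a))) else 0)"
    using True by (simp add: tbr_def M_def mu_ifL)
  also have "\<dots> = (\<Sum>i\<le>n-a. mu i x (Y (n-(i+a))))"
    by (rule sum_restrict2) (use True in auto)
  finally show ?thesis using True by (simp add: add.commute)
next
  case False
  then show ?thesis
  proof (cases "n \<le> K")
    case True
    then show ?thesis using False by (auto simp: tbr_def M_def intro!: sum.neutral)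
  qed (simp add: tbr_def)
qed


lemma c2f: "(F::nat \<Rightarrow> 'a) + F = 0"
  by (simp add: fun_eq_iff c2a)

lemma c2feq: "((F::nat \<Rightarrow> 'a) + G = 0) = (F = G)"
  by (metis add_eq_0_iff c2f minus_equation_iff)

lemmas tbrL = tbr_addL[of mu, OF muL]
lemmas tbrR = tbr_addR[of mu, OF muR]

lemma tbr_alt: "tbr K mu X Y n = (if n \<le> K then (\<Sum>j\<le>n. \<Sum>l\<le>n. if j + l \<le> n then mu (n-j-l) (X j) (Y l) else 0) else 0)"
proof (cases "n \<le> K")
  case True
  have "tbr K mu X Y n = (\<Sum>i\<le>n. \<Sum>j\<le>n-i. mu i (X j) (Y (n-i-j)))" using True by (simp add: tbr_def)
  also have "\<dots> = (\<Sum>j\<le>n. \<Sum>l\<le>n. if j + l \<le> n then mu (n-j-l) (X j) (Y (n-(n-j-l)-j)) else 0)"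
    by (rule tri_swap)
  also have "\<dots> = (\<Sum>j\<le>n. \<Sum>l\<le>n. if j + l \<le> n then mu (n-j-l) (X j) (Y l) else 0)"
    by (intro sum.cong refl) auto
  finally show ?thesis using True by simp
qed (simp add: tbr_def)

lemma tbr_self: "tbr K mu X X = 0"
proof (rule ext)
  fix n
  show "tbr K mu X X n = 0 n"
    by (simp add: tbr_alt, intro impI sym_sum_zero) (auto simp: c2a muA add.commute muSym)
qed

lemma tbr_sym: "tbr K mu X Y = tbr K mu Y X"
proof -
  have "0 = tbr K mu (X + Y) (X + Y)" by (simp add: tbr_self)
  also have "\<dots> = tbr K mu X Y + tbr K mu Y X" by (simp add: tbrL tbrR tbr_self)
  finally show ?thesis by (metis c2feq)
qed

lemma M_Sh: "a \<le> K \<Longrightarrow> M a x = Sh K a (\<lambda>d. if d = 0 then x else 0)"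
  by (auto simp: M_def Sh_def fun_eq_iff)

lemma tbr_M_Sh: "tbr K mu (M a x) (Sh K e f) = Sh K (a+e) (\<lambda>d. \<Sum>i\<le>d. mu i x (f (d-i)))"
proof (rule ext)
  fix n
  show "tbr K mu (M a x) (Sh K e f) n = Sh K (a+e) (\<lambda>d. \<Sum>i\<le>d. mu i x (f (d-i))) n"
  proof (cases "n \<le> K \<and> a + e \<le> n")
    case True
    have pw: "mu i x (Sh K e f (n - (a + i))) = (if i \<le> n - (a + e) then mu i x (f (n - (a + e) - i)) else 0)" if "i \<le> n - a" for i
      using True that by (cases "i \<le> n - (a + e)") (auto simp: Sh_def add.commute add.left_commute)
    have "tbr K mu (M a x) (Sh K e f) n = (\<Sum>i\<le>n-a. if i \<le> n - (a + e) then mu i x (f (n - (a + e) - i)) else 0)"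
      using True by (simp add: tbr_M1 pw)
    also have "\<dots> = (\<Sum>i\<le>n-(a+e). mu i x (f (n - (a + e) - i)))"
      by (rule sum_restrict) (use True in auto)
    finally show ?thesis using True by (simp add: Sh_def)
  next
    case False
    then show ?thesis by (auto simp: tbr_M1 Sh_def intro!: sum.neutral)
  qed
qed

lemma sum_delta_diff: "(\<Sum>i\<le>(d::nat). if d - i = 0 then f i else 0) = f d"
proof -
  have "(\<Sum>i\<le>d. if d - i = 0 then f i else 0) = (\<Sum>i\<le>d. if i = d then f i else 0)"
    by (rule sum.cong) auto
  then show ?thesis by simp
qed

lemma tbr_MM: "b \<le> K \<Longrightarrow> tbr K mu (M a x) (M b y) = Sh K (a+b) (\<lambda>d. mu d x y)"
  by (simp add: M_Sh[of b] tbr_M_Sh mu_ifR sum_delta_diff)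

lemma tbr_Sh_M: "tbr K mu (Sh K e f) (M b y) = Sh K (e+b) (\<lambda>d. \<Sum>i\<le>d. mu i (f (d-i)) y)"
  by (simp add: tbr_sym[of "Sh K e f"] tbr_M_Sh add.commute muSym)

lemma tom_M: "tom K mu om (M a x) = Sh K (2*a) (\<lambda>d. om d x)"
proof (rule ext)
  fix n
  show "tom K mu om (M a x) n = Sh K (2*a) (\<lambda>d. om d x) n"
  proof (cases "n \<le> K")
    case True
    have 1: "(\<Sum>j\<le>n. if 2 * j \<le> n then om (n - 2 * j) (M a x j) else 0)
       = (\<Sum>j\<le>n. if j = a then (if 2 * a \<le> n then om (n - 2 * a) x else 0) else 0)"
      by (rule sum.cong) (auto simp: M_def)
    have 2: "(\<Sum>j\<le>n. \<Sum>l\<le>n. if j < l \<and> j + l \<le> n then mu (n - j - l) (M a x j) (M a x l) else 0) = 0"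
      by (intro sum.neutral ballI) (auto simp: M_def)
    show ?thesis using True by (simp add: tom_def 1 2 Sh_def)
  qed (simp add: tom_def Sh_def)
qed

lemma tsmul_add: "tsmul K sm l (X + Y) = tsmul K sm l X + tsmul K sm l Y"
  by (auto simp: tsmul_def fun_eq_iff m.scale_right_distrib sum.distrib)

lemma tsmul_M: "tsmul K sm l (M a x) = Sh K a (\<lambda>d. sm (l d) x)"
proof (rule ext)
  fix n
  show "tsmul K sm l (M a x) n = Sh K a (\<lambda>d. sm (l d) x) n"
  proof (cases "n \<le> K \<and> a \<le> n")
    case True
    have "(\<Sum>i\<le>n. sm (l i) (M a x (n - i))) = (\<Sum>i\<le>n. if i = n - a then sm (l i) x else 0)"
      by (rule sum.cong) (use True in \<open>auto simp: M_def\<close>)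
    then have "tsmul K sm l (M a x) n = (\<Sum>i\<le>n. if i = n - a then sm (l i) x else 0)"
      using True by (simp add: tsmul_def)
    then show ?thesis using True by (simp add: Sh_def)
  next
    case False
    then show ?thesis by (auto simp: tsmul_def M_def Sh_def intro!: sum.neutral)
  qed
qed

lemma tsmul_Sh: "tsmul K sm l (Sh K e f) = Sh K e (\<lambda>d. \<Sum>p\<le>d. sm (l p) (f (d-p)))"
proof (rule ext)
  fix n
  show "tsmul K sm l (Sh K e f) n = Sh K e (\<lambda>d. \<Sum>p\<le>d. sm (l p) (f (d-p))) n"
  proof (cases "n \<le> K \<and> e \<le> n")
    case True
    have pw: "sm (l p) (Sh K e f (n-p)) = (if p \<le> n - e then sm (l p) (f (n - e - p)) else 0)" if "p \<le> n" for p
      using True that by (cases "p \<le> n - e") (auto simp: Sh_def add.commute)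
    have "tsmul K sm l (Sh K e f) n = (\<Sum>p\<le>n. if p \<le> n - e then sm (l p) (f (n - e - p)) else 0)"
      using True by (simp add: tsmul_def pw)
    also have "\<dots> = (\<Sum>p\<le>n-e. sm (l p) (f (n - e - p)))"
      by (rule sum_restrict) (use True in auto)
    finally show ?thesis using True by (simp add: Sh_def)
  next
    case False
    then show ?thesis by (auto simp: tsmul_def Sh_def intro!: sum.neutral)
  qed
qed


lemma if_add0: "(if c then (a::'b::comm_monoid_add) + b else 0) = (if c then a else 0) + (if c then b else 0)"
  by simp

lemma tom_add: "tom K mu om (X + Y) = tom K mu om X + tom K mu om Y + tbr K mu X Y"
proof (rule ext)
  fix n
  show "tom K mu om (X + Y) n = (tom K mu om X + tom K mu om Y + tbr K mu X Y) n"
  proof (cases "n \<le> K")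
    case True
    define D where "D = (\<Sum>j\<le>n. if 2 * j \<le> n then mu (n - 2 * j) (X j) (Y j) else 0)"
    define P where "P = (\<Sum>j\<le>n. \<Sum>l\<le>n. if j < l \<and> j + l \<le> n then mu (n - j - l) (X j) (Y l) else 0)"
    define P' where "P' = (\<Sum>j\<le>n. \<Sum>l\<le>n. if j < l \<and> j + l \<le> n then mu (n - j - l) (Y j) (X l) else 0)"
    have s1: "(\<Sum>j\<le>n. if 2 * j \<le> n then om (n - 2 * j) (X j + Y j) else 0)
        = (\<Sum>j\<le>n. if 2 * j \<le> n then om (n - 2 * j) (X j) else 0)
        + (\<Sum>j\<le>n. if 2 * j \<le> n then om (n - 2 * j) (Y j) else 0) + D"
      unfolding D_def sum.distrib[symmetric] by (rule sum.cong) (auto simp: omA)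
    have s2: "(\<Sum>j\<le>n. \<Sum>l\<le>n. if j < l \<and> j + l \<le> n then mu (n - j - l) (X j + Y j) (X l + Y l) else 0)
        = (\<Sum>j\<le>n. \<Sum>l\<le>n. if j < l \<and> j + l \<le> n then mu (n - j - l) (X j) (X l) else 0)
        + (\<Sum>j\<le>n. \<Sum>l\<le>n. if j < l \<and> j + l \<le> n then mu (n - j - l) (Y j) (Y l) else 0) + (P + P')"
      unfolding P_def P'_def sum.distrib[symmetric] by (intro sum.cong refl) (auto simp: muL muR ac_simps)
    have pw: "(if j + l \<le> n then mu (n - j - l) (X j) (Y l) else 0)
       = (if j < l \<and> j + l \<le> n then mu (n - j - l) (X j) (Y l) else 0)
       + (if j = l then (if 2 * j \<le> n then mu (n - 2 * j) (X j) (Y j) else 0) else 0)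
       + (if l < j \<and> j + l \<le> n then mu (n - j - l) (X j) (Y l) else 0)" for j l
      by (cases j l rule: linorder_cases) (auto simp: mult_2)
    have "tbr K mu X Y n = (\<Sum>j\<le>n. \<Sum>l\<le>n. if j + l \<le> n then mu (n-j-l) (X j) (Y l) else 0)"
      using True by (simp add: tbr_alt)
    also have "\<dots> = P + D + (\<Sum>j\<le>n. \<Sum>l\<le>n. if l < j \<and> j + l \<le> n then mu (n - j - l) (X j) (Y l) else 0)"
      unfolding P_def D_def pw sum.distrib by (simp add: sum.delta')
    also have "(\<Sum>j\<le>n. \<Sum>l\<le>n. if l < j \<and> j + l \<le> n then mu (n - j - l) (X j) (Y l) else 0)
       = (\<Sum>l\<le>n. \<Sum>j\<le>n. if l < j \<and> j + l \<le> n then mu (n - j - l) (X j) (Y l) else 0)"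
      by (rule sum.swap)
    also have "\<dots> = P'"
      unfolding P'_def by (intro sum.cong refl) (auto simp: muSym add.commute diff_commute)
    finally have tb: "tbr K mu X Y n = P + D + P'" .
    show ?thesis using True by (simp only: tom_def s1 s2 tb if_True plus_fun_apply) (simp add: ac_simps)
  qed (simp add: tom_def tbr_def)
qed


lemma jac_M: "b \<le> K \<Longrightarrow> c \<le> K \<Longrightarrow> a \<le> K \<Longrightarrow>
   tbr K mu (M a x) (tbr K mu (M b y) (M c z)) + tbr K mu (M b y) (tbr K mu (M c z) (M a x))
   + tbr K mu (M c z) (tbr K mu (M a x) (M b y)) = Sh K (a+b+c) (\<lambda>d. Jsum mu d x y z)"
  unfolding Jsum_def sum.distrib by (simp add: tbr_MM tbr_M_Sh Sh_add ac_simps)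

lemma R_M: "b \<le> K \<Longrightarrow> tbr K mu (tom K mu om (M a x)) (M b y) = Sh K (2*a+b) (\<lambda>d. Rl mu om d x y)"
  by (simp add: tom_M tbr_Sh_M Rl_def)

lemma R_M2: "b \<le> K \<Longrightarrow> a \<le> K \<Longrightarrow> tbr K mu (M a x) (tbr K mu (M a x) (M b y)) = Sh K (2*a+b) (\<lambda>d. Rr mu d x y)"
  by (simp add: tbr_MM tbr_M_Sh Rr_def mult_2 mult_2_right ac_simps)

lemma RLT_imp:
  assumes "restricted_lie_trunc K sm mu om" "n \<le> K"
  shows "Jsum mu n x y z = 0" "Rl mu om n x y = Rr mu n x y"
proof -
  have l0: "(\<lambda>_. 0::'k) \<in> tK K" by (simp add: tK_def)
  have X: "M 0 x \<in> tA K" "M 0 y \<in> tA K" "M 0 z \<in> tA K" by (simp_all add: M_tA)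
  have J: "tbr K mu (M 0 x) (tbr K mu (M 0 y) (M 0 z)) + tbr K mu (M 0 y) (tbr K mu (M 0 z) (M 0 x))
   + tbr K mu (M 0 z) (tbr K mu (M 0 x) (M 0 y)) = 0"
    using assms(1) X l0 unfolding restricted_lie_trunc_def tadd_eq zero_fun_def[symmetric] by blast
  then have "Sh K 0 (\<lambda>d. Jsum mu d x y z) n = 0" by (simp add: jac_M)
  then show "Jsum mu n x y z = 0" using assms(2) by (simp add: Sh0)
  have R: "tbr K mu (tom K mu om (M 0 x)) (M 0 y) = tbr K mu (M 0 x) (tbr K mu (M 0 x) (M 0 y))"
    using assms(1) X l0 unfolding restricted_lie_trunc_def by blast
  then have "Sh K 0 (\<lambda>d. Rl mu om d x y) n = Sh K 0 (\<lambda>d. Rr mu d x y) n"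
    by (simp add: R_M R_M2)
  then show "Rl mu om n x y = Rr mu n x y" using assms(2) by (simp add: Sh0)
qed


end

locale defoJR = defo sm mu om K
  for sm :: "'k::field \<Rightarrow> 'a::comm_ring \<Rightarrow> 'a" and mu om K +
  assumes J: "\<And>n x y z. n \<le> K \<Longrightarrow> Jsum mu n x y z = 0"
    and R: "\<And>n x y. n \<le> K \<Longrightarrow> Rl mu om n x y = Rr mu n x y"
begin

lemma jac:
  assumes X: "X \<in> tA K" and Y: "Y \<in> tA K" and Z: "Z \<in> tA K"
  shows "tbr K mu X (tbr K mu Y Z) + tbr K mu Y (tbr K mu Z X) + tbr K mu Z (tbr K mu X Y) = 0"
proof -
  have mono: "tbr K mu (M a x) (tbr K mu (M b y) (M c z)) + tbr K mu (M b y) (tbr K mu (M c z) (M a x))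
   + tbr K mu (M c z) (tbr K mu (M a x) (M b y)) = 0" if "a \<le> K" "b \<le> K" "c \<le> K" for a b c x y z
  proof -
    have "Sh K (a+b+c) (\<lambda>d. Jsum mu d x y z) = Sh K (a+b+c) (\<lambda>d. 0)" by (rule Sh_cong) (simp add: J)
    then show ?thesis using that by (simp add: jac_M Sh_zero)
  qed
  have s3: "tbr K mu (M a x) (tbr K mu (M b y) W) + tbr K mu (M b y) (tbr K mu W (M a x))
   + tbr K mu W (tbr K mu (M a x) (M b y)) = 0" if "a \<le> K" "b \<le> K" "W \<in> tA K" for a b x y W
    by (rule addext[where F="\<lambda>W. tbr K mu (M a x) (tbr K mu (M b y) W) + tbr K mu (M b y) (tbr K mu W (M a x))
   + tbr K mu W (tbr K mu (M a x) (M b y))", OF _ _ that(3)])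
      (simp add: tbrL tbrR ac_simps, rule mono[OF that(1,2)])
  have s2: "tbr K mu (M a x) (tbr K mu V Z) + tbr K mu V (tbr K mu Z (M a x))
   + tbr K mu Z (tbr K mu (M a x) V) = 0" if "a \<le> K" "V \<in> tA K" for a x V
  proof (rule addext[where F="\<lambda>V. tbr K mu (M a x) (tbr K mu V Z) + tbr K mu V (tbr K mu Z (M a x))
   + tbr K mu Z (tbr K mu (M a x) V)", OF _ _ that(2)])
    show "\<And>b y. b \<le> K \<Longrightarrow> tbr K mu (M a x) (tbr K mu (M b y) Z) + tbr K mu (M b y) (tbr K mu Z (M a x))
   + tbr K mu Z (tbr K mu (M a x) (M b y)) = 0"
      using s3[OF that(1) _ Z] by blast
  qed (simp_all add: tbrL tbrR ac_simps)
  show ?thesis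
  proof (rule addext[where F="\<lambda>X. tbr K mu X (tbr K mu Y Z) + tbr K mu Y (tbr K mu Z X) + tbr K mu Z (tbr K mu X Y)", OF _ _ X])
    show "\<And>a x. a \<le> K \<Longrightarrow> tbr K mu (M a x) (tbr K mu Y Z) + tbr K mu Y (tbr K mu Z (M a x)) + tbr K mu Z (tbr K mu (M a x) Y) = 0"
      using s2[OF _ Y] by blast
  qed (simp_all add: tbrL tbrR ac_simps)
qed

lemma tbr_smulL:
  assumes X: "X \<in> tA K" and Y: "Y \<in> tA K"
  shows "tbr K mu (tsmul K sm l X) Y = tsmul K sm l (tbr K mu X Y)"
proof -
  have mono: "tbr K mu (tsmul K sm l (M a x)) (M b y) - tsmul K sm l (tbr K mu (M a x) (M b y)) = 0"
    if "a \<le> K" "b \<le> K" for a b x y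
  proof -
    have "tbr K mu (tsmul K sm l (M a x)) (M b y) = Sh K (a+b) (\<lambda>d. \<Sum>i\<le>d. sm (l (d-i)) (mu i x y))"
      by (simp add: tsmul_M tbr_Sh_M muSL)
    also have "\<dots> = Sh K (a+b) (\<lambda>d. \<Sum>p\<le>d. sm (l p) (mu (d-p) x y))"
      by (rule Sh_cong, rule sum_rev2[where g="\<lambda>p i. sm (l p) (mu i x y)"])
    also have "\<dots> = tsmul K sm l (tbr K mu (M a x) (M b y))"
      using that by (simp add: tbr_MM tsmul_Sh)
    finally show ?thesis by simp
  qed
  have s2: "tbr K mu (tsmul K sm l (M a x)) W - tsmul K sm l (tbr K mu (M a x) W) = 0"
    if "a \<le> K" "W \<in> tA K" for a x W
    by (rule addext[where F="\<lambda>W. tbr K mu (tsmul K sm l (M a x)) W - tsmul K sm l (tbr K mu (M a x) W)", OF _ _ that(2)])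
      (simp_all add: tbrR tsmul_add mono that)
  have "tbr K mu (tsmul K sm l X) Y - tsmul K sm l (tbr K mu X Y) = 0"
    by (rule addext[where F="\<lambda>X. tbr K mu (tsmul K sm l X) Y - tsmul K sm l (tbr K mu X Y)", OF _ _ X])
      (simp_all add: tbrL tsmul_add s2 Y)
  then show ?thesis by simp
qed

lemma tbr_smulR:
  assumes X: "X \<in> tA K" and Y: "Y \<in> tA K"
  shows "tbr K mu X (tsmul K sm l Y) = tsmul K sm l (tbr K mu X Y)"
  using tbr_smulL[OF Y X] by (simp add: tbr_sym[of X])

lemma tsmul_assoc:
  assumes Z: "Z \<in> tA K"
  shows "tsmul K sm l (tsmul K sm l' Z) = tsmul K sm (tmulK K l l') Z"
proof -
  have mono: "tsmul K sm l (tsmul K sm l' (M a z)) - tsmul K sm (tmulK K l l') (M a z) = 0" for a z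
  proof -
    have "tsmul K sm l (tsmul K sm l' (M a z)) = Sh K a (\<lambda>d. \<Sum>p\<le>d. sm (l p * l' (d - p)) z)"
      by (simp add: tsmul_M tsmul_Sh)
    also have "\<dots> = tsmul K sm (tmulK K l l') (M a z)"
      by (simp add: tsmul_M, rule Sh_cong) (simp add: tmulK_def m.scale_sum_left)
    finally show ?thesis by simp
  qed
  have "tsmul K sm l (tsmul K sm l' Z) - tsmul K sm (tmulK K l l') Z = 0"
    by (rule addext[where F="\<lambda>Z. tsmul K sm l (tsmul K sm l' Z) - tsmul K sm (tmulK K l l') Z", OF _ _ Z])
      (simp_all add: tsmul_add mono)
  then show ?thesis by simp
qed


lemma tbr_om:
  assumes X: "X \<in> tA K" and Y: "Y \<in> tA K"
  shows "tbr K mu (tom K mu om X) Y = tbr K mu X (tbr K mu X Y)"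
proof -
  have mono: "tbr K mu (tom K mu om (M a x)) W + tbr K mu (M a x) (tbr K mu (M a x) W) = 0"
    if "a \<le> K" "W \<in> tA K" for a x W
  proof (rule addext[where F="\<lambda>W. tbr K mu (tom K mu om (M a x)) W + tbr K mu (M a x) (tbr K mu (M a x) W)", OF _ _ that(2)])
    fix b y assume b: "b \<le> K"
    have "tbr K mu (tom K mu om (M a x)) (M b y) = Sh K (2*a+b) (\<lambda>d. Rl mu om d x y)" by (rule R_M[OF b])
    also have "\<dots> = Sh K (2*a+b) (\<lambda>d. Rr mu d x y)" by (rule Sh_cong) (simp add: R)
    also have "\<dots> = tbr K mu (M a x) (tbr K mu (M a x) (M b y))" by (rule R_M2[OF b that(1), symmetric])
    finally show "tbr K mu (tom K mu om (M a x)) (M b y) + tbr K mu (M a x) (tbr K mu (M a x) (M b y)) = 0"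
      by (simp add: c2f)
  qed (simp add: tbrR ac_simps)
  have add: "tbr K mu (tom K mu om (U + V)) Y + tbr K mu (U + V) (tbr K mu (U + V) Y)
     = (tbr K mu (tom K mu om U) Y + tbr K mu U (tbr K mu U Y)) + (tbr K mu (tom K mu om V) Y + tbr K mu V (tbr K mu V Y))"
    if U: "U \<in> tA K" and V: "V \<in> tA K" for U V
  proof -
    have e1: "tbr K mu V (tbr K mu Y U) = tbr K mu V (tbr K mu U Y)" by (simp only: tbr_sym[of Y U])
    have e2: "tbr K mu Y (tbr K mu U V) = tbr K mu (tbr K mu U V) Y" by (rule tbr_sym)
    have br0: "tbr K mu (tbr K mu U V) Y + tbr K mu U (tbr K mu V Y) + tbr K mu V (tbr K mu U Y) = 0"
      using jac[OF U V Y] e1 e2 by (simp add: ac_simps)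
    have "tbr K mu (tom K mu om (U + V)) Y + tbr K mu (U + V) (tbr K mu (U + V) Y)
     = (tbr K mu (tom K mu om U) Y + tbr K mu U (tbr K mu U Y)) + (tbr K mu (tom K mu om V) Y + tbr K mu V (tbr K mu V Y))
       + (tbr K mu (tbr K mu U V) Y + tbr K mu U (tbr K mu V Y) + tbr K mu V (tbr K mu U Y))"
      by (simp add: tom_add tbrL tbrR ac_simps)
    then show ?thesis using br0 by simp
  qed
  have "tbr K mu (tom K mu om X) Y + tbr K mu X (tbr K mu X Y) = 0"
    by (rule addext[where F="\<lambda>X. tbr K mu (tom K mu om X) Y + tbr K mu X (tbr K mu X Y)", OF _ _ X])
      (simp only: add, rule mono[OF _ Y])
  then show ?thesis by (simp add: c2feq)
qed

lemma tmulK_sq: "p \<le> K \<Longrightarrow> tmulK K (l::nat \<Rightarrow> 'k::field) l p = (if even p then (l (p div 2))^2 else 0)"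
proof -
  assume p: "p \<le> K"
  have "(\<Sum>i\<le>p. l i * l (p - i)) = (if even p then l (p div 2) * l (p - p div 2) else 0)"
    apply (rule frob_sum)
     apply (rule c2k)
    apply (simp add: mult.commute)
    done
  also have "\<dots> = (if even p then (l (p div 2))^2 else 0)"
    by (auto simp: power2_eq_square elim!: evenE)
  finally show ?thesis using p by (simp add: tmulK_def)
qed


lemma tom_Sh_sm: "tom K mu om (Sh K a (\<lambda>d. sm (l d) x)) = (\<lambda>n. if n \<le> K then
   (\<Sum>j\<le>n. if 2 * j \<le> n \<and> a \<le> j then sm ((l (j - a))^2) (om (n - 2 * j) x) else 0) else 0)"
proof (rule ext)
  fix n
  show "tom K mu om (Sh K a (\<lambda>d. sm (l d) x)) n = (if n \<le> K then
   (\<Sum>j\<le>n. if 2 * j \<le> n \<and> a \<le> j then sm ((l (j - a))^2) (om (n - 2 * j) x) else 0) else 0)"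
  proof (cases "n \<le> K")
    case True
    have 1: "(\<Sum>j\<le>n. if 2 * j \<le> n then om (n - 2 * j) (Sh K a (\<lambda>d. sm (l d) x) j) else 0)
      = (\<Sum>j\<le>n. if 2 * j \<le> n \<and> a \<le> j then sm ((l (j - a))^2) (om (n - 2 * j) x) else 0)"
      by (rule sum.cong) (use True in \<open>auto simp: Sh_def omS\<close>)
    have 2: "(\<Sum>j\<le>n. \<Sum>i\<le>n. if j < i \<and> j + i \<le> n then mu (n - j - i) (Sh K a (\<lambda>d. sm (l d) x) j) (Sh K a (\<lambda>d. sm (l d) x) i) else 0) = 0"
      by (intro sum.neutral ballI) (auto simp: Sh_def muSL muSR muA)
    show ?thesis using True by (simp only: tom_def 1 2 if_True) simp
  qed (simp add: tom_def)
qed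

lemma tom_smul:
  assumes X: "X \<in> tA K"
  shows "tom K mu om (tsmul K sm l X) = tsmul K sm (tmulK K l l) (tom K mu om X)"
proof -
  have mono: "tom K mu om (tsmul K sm l (M a x)) + tsmul K sm (tmulK K l l) (tom K mu om (M a x)) = 0" for a x
  proof -
    have "tom K mu om (tsmul K sm l (M a x)) = tsmul K sm (tmulK K l l) (tom K mu om (M a x))"
    proof (rule ext)
      fix n
      show "tom K mu om (tsmul K sm l (M a x)) n = tsmul K sm (tmulK K l l) (tom K mu om (M a x)) n"
      proof (cases "n \<le> K \<and> 2 * a \<le> n")
        case True
        have ar: "\<And>j. a \<le> j \<Longrightarrow> 2 * a + 2 * (j - a) = 2 * j" by auto
        have "tom K mu om (tsmul K sm l (M a x)) n
          = (\<Sum>j\<le>n. if 2 * j \<le> n \<and> a \<le> j then sm ((l (j - a))^2) (om (n - 2 * a - 2 * (j - a)) x) else 0)"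
          using True by (simp add: tsmul_M tom_Sh_sm) (intro sum.cong refl, auto simp: ar)
        also have "\<dots> = (\<Sum>p\<le>n - 2 * a. if even p then sm ((l (p div 2))^2) (om (n - 2 * a - 2 * (p div 2)) x) else 0)"
          by (rule reidx_even[where g="\<lambda>b. sm ((l b)^2) (om (n - 2 * a - 2 * b) x)"]) (use True in simp)
        also have "\<dots> = (\<Sum>p\<le>n - 2 * a. sm (tmulK K l l p) (om (n - 2 * a - p) x))"
          by (rule sum.cong) (use True in \<open>auto simp: tmulK_sq elim!: evenE\<close>)
        also have "\<dots> = tsmul K sm (tmulK K l l) (tom K mu om (M a x)) n"
          using True by (simp add: tom_M tsmul_Sh) (simp add: Sh_def)
        finally show ?thesis .
      next
        case False
        then show ?thesis
          by (simp add: tsmul_M tom_Sh_sm tom_M tsmul_Sh) (auto simp: Sh_def intro!: sum.neutral)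
      qed
    qed
    then show ?thesis by (simp add: c2f)
  qed
  have add: "tom K mu om (tsmul K sm l (U + V)) + tsmul K sm (tmulK K l l) (tom K mu om (U + V))
    = (tom K mu om (tsmul K sm l U) + tsmul K sm (tmulK K l l) (tom K mu om U))
    + (tom K mu om (tsmul K sm l V) + tsmul K sm (tmulK K l l) (tom K mu om V))"
    if U: "U \<in> tA K" and V: "V \<in> tA K" for U V
  proof -
    have b: "tbr K mu (tsmul K sm l U) (tsmul K sm l V) = tsmul K sm (tmulK K l l) (tbr K mu U V)"
      by (simp add: tbr_smulL[OF U tsmul_tA] tbr_smulR[OF U V] tsmul_assoc[OF tbr_tA])
    have "tom K mu om (tsmul K sm l (U + V)) + tsmul K sm (tmulK K l l) (tom K mu om (U + V))
      = (tom K mu om (tsmul K sm l U) + tsmul K sm (tmulK K l l) (tom K mu om U))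
      + (tom K mu om (tsmul K sm l V) + tsmul K sm (tmulK K l l) (tom K mu om V))
      + (tsmul K sm (tmulK K l l) (tbr K mu U V) + tsmul K sm (tmulK K l l) (tbr K mu U V))"
      by (simp add: tsmul_add tom_add b ac_simps)
    then show ?thesis by (simp add: c2f)
  qed
  have "tom K mu om (tsmul K sm l X) + tsmul K sm (tmulK K l l) (tom K mu om X) = 0"
    by (rule addext[where F="\<lambda>X. tom K mu om (tsmul K sm l X) + tsmul K sm (tmulK K l l) (tom K mu om X)", OF _ _ X])
      (simp only: add, rule mono)
  then show ?thesis by (simp add: c2feq)
qed

lemma RLT: "restricted_lie_trunc K sm mu om"
  unfolding restricted_lie_trunc_def tadd_eq zero_fun_def[symmetric]
  by (simp add: tbrL tbrR tbr_smulL tbr_smulR tbr_self jac tom_smul tbr_om tom_add)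

end


definition cl :: "nat \<Rightarrow> (nat \<Rightarrow> 'b) \<Rightarrow> 'b \<Rightarrow> nat \<Rightarrow> 'b" where
  "cl K f z i = (if i \<le> K then f i else z)"

lemma tbr_cl: "tbr K (cl K mu z) = tbr K mu"
  by (intro ext) (auto simp: tbr_def cl_def intro!: sum.cong)

lemma tom_cl: "tom K (cl K mu z) (cl K om z') = tom K mu om"
proof (intro ext)
  fix X n
  show "tom K (cl K mu z) (cl K om z') X n = tom K mu om X n"
  proof (cases "n \<le> K")
    case True
    have 1: "(\<Sum>j\<le>n. if 2 * j \<le> n then cl K om z' (n - 2 * j) (X j) else 0) = (\<Sum>j\<le>n. if 2 * j \<le> n then om (n - 2 * j) (X j) else 0)"
      by (rule sum.cong) (use True in \<open>auto simp: cl_def\<close>)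
    have 2: "(\<Sum>j\<le>n. \<Sum>l\<le>n. if j < l \<and> j + l \<le> n then cl K mu z (n - j - l) (X j) (X l) else 0)
      = (\<Sum>j\<le>n. \<Sum>l\<le>n. if j < l \<and> j + l \<le> n then mu (n - j - l) (X j) (X l) else 0)"
      by (intro sum.cong refl) (use True in \<open>auto simp: cl_def\<close>)
    show ?thesis by (simp only: tom_def 1 2)
  qed (simp add: tom_def)
qed

lemma RLT_cl: "restricted_lie_trunc K sm (cl K mu z) (cl K om z') = restricted_lie_trunc K sm mu om"
  by (simp add: restricted_lie_trunc_def tbr_cl tom_cl)

lemma Jsum_cl: "n \<le> K \<Longrightarrow> Jsum (cl K mu z) n x y w = Jsum mu n x y w"
  by (auto simp: Jsum_def cl_def intro!: sum.cong)

lemma Rl_cl: "n \<le> K \<Longrightarrow> Rl (cl K mu z) (cl K om z') n x y = Rl mu om n x y"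
  by (auto simp: Rl_def cl_def intro!: sum.cong)

lemma Rr_cl: "n \<le> K \<Longrightarrow> Rr (cl K mu z) n x y = Rr mu n x y"
  by (auto simp: Rr_def cl_def intro!: sum.cong)


lemma defo_cl:
  fixes sm :: "'k::field \<Rightarrow> 'a::comm_ring \<Rightarrow> 'a"
  assumes c2k: "\<And>c::'k. c + c = 0" and c2a: "\<And>x::'a. x + x = 0"
    and rp: "restricted_poisson sm br p2"
    and cp: "\<And>i. 0 < i \<Longrightarrow> i \<le> K \<Longrightarrow> C2PA sm (mus i) (oms i)"
  shows "defo sm (cl K (mus(0 := br)) (\<lambda>_ _. 0)) (cl K (oms(0 := p2)) (\<lambda>_. 0))"
proof -
  have b1: "mus i (x + y) z = mus i x z + mus i y z" if "0 < i" "i \<le> K" for i x y z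
    using cp[OF that] unfolding C2PA_def biderivation_def by simp
  have b2: "mus i x (y + z) = mus i x y + mus i x z" if "0 < i" "i \<le> K" for i x y z
    using cp[OF that] unfolding C2PA_def biderivation_def by simp
  have b3: "mus i (sm c x) y = sm c (mus i x y)" if "0 < i" "i \<le> K" for i c x y
    using cp[OF that] unfolding C2PA_def biderivation_def by simp
  have b4: "mus i x (sm c y) = sm c (mus i x y)" if "0 < i" "i \<le> K" for i c x y
    using cp[OF that] unfolding C2PA_def biderivation_def by simp
  have b5: "mus i x x = 0" if "0 < i" "i \<le> K" for i x
    using cp[OF that] unfolding C2PA_def biderivation_def by simp
  have b6: "oms i (x + y) = oms i x + oms i y + mus i x y" if "0 < i" "i \<le> K" for i x y
    using cp[OF that] unfolding C2PA_def by simp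
  have b7: "oms i (sm c x) = sm (c^2) (oms i x)" if "0 < i" "i \<le> K" for i c x
    using cp[OF that] unfolding C2PA_def by simp
  have md: "module sm" using rp by (simp add: restricted_poisson_def k_algebra_def)
  interpret m: module sm by (fact md)
  have r1: "\<And>x y z. br (x + y) z = br x z + br y z"
   and r2: "\<And>x y z. br x (y + z) = br x y + br x z"
   and r3: "\<And>c x y. br (sm c x) y = sm c (br x y)"
   and r4: "\<And>c x y. br x (sm c y) = sm c (br x y)"
   and r5: "\<And>x. br x x = 0"
   and r6: "\<And>x y. p2 (x + y) = p2 x + p2 y + br x y"
   and r7: "\<And>c x. p2 (sm c x) = sm (c^2) (p2 x)"
    using rp unfolding restricted_poisson_def by simp_all
  show ?thesis
  proof (unfold_locales)
    fix i x y z c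
    show "cl K (mus(0 := br)) (\<lambda>_ _. 0) i (x + y) z = cl K (mus(0 := br)) (\<lambda>_ _. 0) i x z + cl K (mus(0 := br)) (\<lambda>_ _. 0) i y z"
      by (cases "i = 0"; cases "i \<le> K") (simp_all add: cl_def r1 b1)
    show "cl K (mus(0 := br)) (\<lambda>_ _. 0) i x (y + z) = cl K (mus(0 := br)) (\<lambda>_ _. 0) i x y + cl K (mus(0 := br)) (\<lambda>_ _. 0) i x z"
      by (cases "i = 0"; cases "i \<le> K") (simp_all add: cl_def r2 b2)
    show "cl K (mus(0 := br)) (\<lambda>_ _. 0) i (sm c x) y = sm c (cl K (mus(0 := br)) (\<lambda>_ _. 0) i x y)"
      by (cases "i = 0"; cases "i \<le> K") (simp_all add: cl_def r3 b3)
    show "cl K (mus(0 := br)) (\<lambda>_ _. 0) i x (sm c y) = sm c (cl K (mus(0 := br)) (\<lambda>_ _. 0) i x y)"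
      by (cases "i = 0"; cases "i \<le> K") (simp_all add: cl_def r4 b4)
    show "cl K (mus(0 := br)) (\<lambda>_ _. 0) i x x = 0"
      by (cases "i = 0"; cases "i \<le> K") (simp_all add: cl_def r5 b5)
    show "cl K (oms(0 := p2)) (\<lambda>_. 0) i (x + y) = cl K (oms(0 := p2)) (\<lambda>_. 0) i x + cl K (oms(0 := p2)) (\<lambda>_. 0) i y + cl K (mus(0 := br)) (\<lambda>_ _. 0) i x y"
      by (cases "i = 0"; cases "i \<le> K") (simp_all add: cl_def r6 b6)
    show "cl K (oms(0 := p2)) (\<lambda>_. 0) i (sm c x) = sm (c^2) (cl K (oms(0 := p2)) (\<lambda>_. 0) i x)"
      by (cases "i = 0"; cases "i \<le> K") (simp_all add: cl_def r7 b7)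
  qed (simp_all add: md c2k c2a)
qed


lemma sum_split_ends: fixes k :: nat shows "(\<Sum>i\<le>k+1. f i) = f 0 + (\<Sum>i\<in>{1..k}. f i) + (f (k+1) :: 'b::comm_monoid_add)"
proof (induct k)
  case 0
  then show ?case by simp
next
  case (Suc k)
  have "(\<Sum>i\<le>Suc k + 1. f i) = (\<Sum>i\<le>k+1. f i) + f (Suc k + 1)" by simp
  also have "\<dots> = f 0 + ((\<Sum>i\<in>{1..k}. f i) + f (k+1)) + f (Suc k + 1)" using Suc by (simp add: ac_simps)
  also have "(\<Sum>i\<in>{1..k}. f i) + f (k+1) = (\<Sum>i\<in>{1..Suc k}. f i)" by simp
  finally show ?case by simp
qed


theorem mainTheorem7:
  fixes sm :: "'k::field \<Rightarrow> 'a::comm_ring \<Rightarrow> 'a"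
    and br :: "'a \<Rightarrow> 'a \<Rightarrow> 'a" and p2 :: "'a \<Rightarrow> 'a"
    and k :: nat
    and mus :: "nat \<Rightarrow> 'a \<Rightarrow> 'a \<Rightarrow> 'a" and oms :: "nat \<Rightarrow> 'a \<Rightarrow> 'a"
  assumes "CHAR('k) = 2"
    and "restricted_poisson sm br p2"
    and "k \<ge> 1"
    and "formal_deformation sm br p2 k mus oms"
    and "C2PA sm (mus (k + 1)) (oms (k + 1))"
  shows "formal_deformation sm br p2 (k + 1) mus oms \<longleftrightarrow>
    ((\<forall>x y z. obs1 mus k x y z = dCE br (mus (k + 1)) x y z) \<and>
     (\<forall>x y. obs2 mus oms k x y = delta2 br p2 (mus (k + 1)) (oms (k + 1)) x y))"
proof -
  have rp: "restricted_poisson sm br p2" by (fact assms(2))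
  have md: "module sm" using rp by (simp add: restricted_poisson_def k_algebra_def)
  interpret m: module sm by (fact md)
  have two: "(2::'k) = 0" using of_nat_CHAR[where 'a='k] assms(1) by simp
  have c2k: "c + c = 0" for c :: 'k using two by (metis mult_2 mult_zero_left)
  have c2a: "x + x = 0" for x :: 'a
  proof -
    have "x + x = sm 1 x + sm 1 x" by simp
    also have "\<dots> = sm (1 + 1) x" by (rule m.scale_left_distrib[symmetric])
    also have "(1::'k) + 1 = 0" by (rule c2k)
    finally show ?thesis by simp
  qed
  define mu0 where "mu0 = mus(0 := br)"
  define om0 where "om0 = oms(0 := p2)"
  define cmu where "cmu K = cl K mu0 (\<lambda>_ _. 0)" for K
  define com where "com K = cl K om0 (\<lambda>_. 0)" for K
  have FDk: "\<forall>i\<in>{1..k}. C2PA sm (mus i) (oms i)" "restricted_lie_trunc k sm mu0 om0"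
    using assms(4) unfolding formal_deformation_def mu0_def om0_def by auto
  have cp: "C2PA sm (mus i) (oms i)" if "0 < i" "i \<le> k+1" for i
    using FDk(1) assms(5) that by (cases "i = k+1") auto
  have D: "defo sm (cmu K) (com K)" if "K \<le> k+1" for K
    unfolding cmu_def com_def mu0_def om0_def by (rule defo_cl[OF c2k c2a rp]) (use cp that in auto)
  have low: "Jsum mu0 n x y z = 0 \<and> Rl mu0 om0 n x y = Rr mu0 n x y" if "n \<le> k" for n x y z
  proof -
    have H: "restricted_lie_trunc k sm (cmu k) (com k)" using FDk(2) by (simp add: cmu_def com_def RLT_cl)
    have "Jsum (cmu k) n x y z = 0" by (rule defo.RLT_imp(1)[OF D H that]) simp
    moreover have "Rl (cmu k) (com k) n x y = Rr (cmu k) n x y" by (rule defo.RLT_imp(2)[OF D H that]) simp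
    ultimately show ?thesis using that by (simp add: cmu_def com_def Jsum_cl Rl_cl Rr_cl)
  qed
  have Dk1: "defo sm (cmu (k+1)) (com (k+1))" by (rule D) simp
  have iff: "restricted_lie_trunc (k+1) sm mu0 om0 \<longleftrightarrow>
     ((\<forall>x y z. Jsum mu0 (k+1) x y z = 0) \<and> (\<forall>x y. Rl mu0 om0 (k+1) x y = Rr mu0 (k+1) x y))"
  proof
    assume H: "restricted_lie_trunc (k+1) sm mu0 om0"
    then have H': "restricted_lie_trunc (k+1) sm (cmu (k+1)) (com (k+1))" by (simp add: cmu_def com_def RLT_cl)
    have "Jsum (cmu (k+1)) (k+1) x y z = 0" for x y z by (rule defo.RLT_imp(1)[OF Dk1 H']) simp
    moreover have "Rl (cmu (k+1)) (com (k+1)) (k+1) x y = Rr (cmu (k+1)) (k+1) x y" for x y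
      by (rule defo.RLT_imp(2)[OF Dk1 H']) simp
    ultimately show "(\<forall>x y z. Jsum mu0 (k+1) x y z = 0) \<and> (\<forall>x y. Rl mu0 om0 (k+1) x y = Rr mu0 (k+1) x y)"
      by (simp add: cmu_def com_def Jsum_cl Rl_cl Rr_cl)
  next
    assume H: "(\<forall>x y z. Jsum mu0 (k+1) x y z = 0) \<and> (\<forall>x y. Rl mu0 om0 (k+1) x y = Rr mu0 (k+1) x y)"
    have J1: "Jsum (cmu (k+1)) n x y z = 0" if "n \<le> k+1" for n x y z
    proof (cases "n \<le> k")
      case True
      then show ?thesis using low[OF True] that by (simp add: cmu_def Jsum_cl)
    next
      case False
      then have "n = k+1" using that by simp
      then show ?thesis using H that by (simp add: cmu_def Jsum_cl)
    qed
    have R1: "Rl (cmu (k+1)) (com (k+1)) n x y = Rr (cmu (k+1)) n x y" if "n \<le> k+1" for n x y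
    proof (cases "n \<le> k")
      case True
      then show ?thesis using low[OF True] that by (simp add: cmu_def com_def Rl_cl Rr_cl)
    next
      case False
      then have "n = k+1" using that by simp
      then show ?thesis using H that by (simp add: cmu_def com_def Rl_cl Rr_cl)
    qed
    have JR: "defoJR sm (cmu (k+1)) (com (k+1)) (k+1)"
      unfolding defoJR_def defoJR_axioms_def using Dk1 J1 R1 by blast
    have "restricted_lie_trunc (k+1) sm (cmu (k+1)) (com (k+1))" by (rule defoJR.RLT[OF JR])
    then show "restricted_lie_trunc (k+1) sm mu0 om0" by (simp add: cmu_def com_def RLT_cl)
  qed
  have symc: "cmu (k+1) i a b = cmu (k+1) i b a" for i a b by (rule defo.muSym[OF Dk1])
  have brs: "br a b = br b a" for a b using symc[of 0 a b] by (simp add: cmu_def cl_def mu0_def)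
  have phs: "mus (k+1) a b = mus (k+1) b a" for a b using symc[of "k+1" a b] by (simp add: cmu_def cl_def mu0_def)
  have mss: "mus i a b = mus i b a" if "1 \<le> i" "i \<le> k" for i a b
    using symc[of i a b] that by (simp add: cmu_def cl_def mu0_def)
  have ceq: "(a + b = 0) = (a = b)" for a b :: 'a by (rule defo.c2eq[OF Dk1])
  have Jeq: "Jsum mu0 (k+1) x y z = obs1 mus k x y z + dCE br (mus (k+1)) x y z" for x y z
  proof -
    have mid: "obs1 mus k x y z = (\<Sum>i\<in>{1..k}. mu0 i x (mu0 (k+1-i) y z) + mu0 i y (mu0 (k+1-i) z x) + mu0 i z (mu0 (k+1-i) x y))"
      unfolding obs1_def by (rule sum.cong) (auto simp: mu0_def)
    have e1: "mus (k+1) x (br y z) = mus (k+1) (br y z) x" by (rule phs)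
    have e2: "mus (k+1) y (br z x) = mus (k+1) (br x z) y" by (metis phs brs)
    have e3: "mus (k+1) z (br x y) = mus (k+1) (br x y) z" by (rule phs)
    have e4: "br y (mus (k+1) z x) = br y (mus (k+1) x z)" by (metis phs)
    have f1: "mus (Suc k) x (br y z) = mus (Suc k) (br y z) x" using e1 by simp
    have f2: "mus (Suc k) y (br z x) = mus (Suc k) (br x z) y" using e2 by simp
    have f3: "mus (Suc k) z (br x y) = mus (Suc k) (br x y) z" using e3 by simp
    have f4: "br y (mus (Suc k) z x) = br y (mus (Suc k) x z)" using e4 by simp
    show ?thesis unfolding Jsum_def sum_split_ends mid by (simp add: mu0_def dCE_def e1 e2 e3 e4 f1 f2 f3 f4 ac_simps)
  qed
  have Req: "Rl mu0 om0 (k+1) x y + Rr mu0 (k+1) x y = obs2 mus oms k x y + delta2 br p2 (mus (k+1)) (oms (k+1)) x y" for x y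
  proof -
    have mid: "obs2 mus oms k x y = (\<Sum>i\<in>{1..k}. mu0 i (om0 (k+1-i) x) y) + (\<Sum>i\<in>{1..k}. mu0 i x (mu0 (k+1-i) x y))"
      unfolding obs2_def sum.distrib[symmetric]
    proof (rule sum.cong[OF refl])
      fix i assume i: "i \<in> {1..k}"
      then show "mus i y (oms (k + 1 - i) x) + mus i x (mus (k + 1 - i) x y)
        = mu0 i (om0 (k+1-i) x) y + mu0 i x (mu0 (k+1-i) x y)"
        using mss[of i y "oms (k + 1 - i) x"] by (simp add: mu0_def om0_def)
    qed
    have e1: "br (oms (k+1) x) y = br y (oms (k+1) x)" by (rule brs)
    have e2: "mus (k+1) x (br x y) = mus (k+1) (br x y) x" by (rule phs)
    have f1: "br (oms (Suc k) x) y = br y (oms (Suc k) x)" using e1 by simp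
    have f2: "mus (Suc k) x (br x y) = mus (Suc k) (br x y) x" using e2 by simp
    show ?thesis unfolding Rl_def Rr_def sum_split_ends mid by (simp add: mu0_def om0_def delta2_def e1 e2 f1 f2 ac_simps)
  qed
  have FDiff: "formal_deformation sm br p2 (k+1) mus oms \<longleftrightarrow> restricted_lie_trunc (k+1) sm mu0 om0"
    unfolding formal_deformation_def mu0_def om0_def using cp by auto
  have j: "(Jsum mu0 (k+1) x y z = 0) = (obs1 mus k x y z = dCE br (mus (k + 1)) x y z)" for x y z
    using Jeq[of x y z] ceq[of "obs1 mus k x y z" "dCE br (mus (k + 1)) x y z"] by simp
  have r: "(Rl mu0 om0 (k+1) x y = Rr mu0 (k+1) x y) = (obs2 mus oms k x y = delta2 br p2 (mus (k + 1)) (oms (k + 1)) x y)" for x y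
    using ceq[of "Rl mu0 om0 (k+1) x y" "Rr mu0 (k+1) x y"] ceq[of "obs2 mus oms k x y" "delta2 br p2 (mus (k + 1)) (oms (k + 1)) x y"] Req[of x y]
    by simp
  show ?thesis unfolding FDiff iff j r by (rule refl)
qed

end
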